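(* Consider the single-hop VAoI system described in the context with maximum average update rate $\alpha\in(0,1]$. The threshold-based policy minimizing the average VAoI subject to the rate constraint $\lim_{T\to\infty}\frac1T\mathbb{E}\big[\sum_{t=0}^{T-1}a(t)\big]\le\alpha$ is a randomized mixture of the two threshold policies with thresholds $\Delta_T^\ast$ and $\Delta_T^\ast-1$, applied with probabilities $\gamma$ and $1-\gamma$ respectively, where \[ \Delta_T^\ast=\left\lceil \frac{p_g}{p_s}\Big(\frac1\alpha-1+p_s\Big)\right\rceil,\qquad \gamma=\frac{R(\Delta_T^\ast-1)-\alpha}{R(\Delta_T^\ast-1)-R(\Delta_T^\ast)}, \] with $R(\Delta_T)=\dfrac{p_g}{(\Delta_T-1)p_s+\beta}$ for $\Delta_T\ge1$, $R(0)=1$, and $\beta=1-(1-p_s)(1-p_g)$.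
   Context: Time is slotted, $t\in\{0,1,2,\dots\}$. An information source generates a new version in each slot independently with probability $p_g$; let $G_t\in\{0,1\}$ indicate whether a new version is generated in slot $t$. A transmitter holding the current source version may, in each slot $t$, attempt to send it to a receiver over an erasure channel; $a(t)\in\{0,1\}$ indicates an attempt, and each attempt succeeds independently with probability $p_s$. The Version Age of Information (VAoI) $\Delta(t)$ evolves as $\Delta(t+1)=G_t$ if $a(t)=1$ and the attempt succeeds, and $\Delta(t+1)=\Delta(t)+G_t$ otherwise. All version-generation and channel events are mutually independent. Assume $0<p_s<1$, $0<p_g<1$. The average VAoI of a policy is $\lim_{T\to\infty}\frac1T\mathbb{E}[\sum_{t=0}^{T-1}\Delta(t)]$. A threshold policy with threshold $\Delta_T\in\{0,1,2,\dots\}$ sets $a(t)=1$ iff $\Delta(t)\ge\Delta_T$; its long-run transmission rate is $R(\Delta_T)$, the stationary probability that $\Delta\ge\Delta_T$. A randomized mixture of threshold policies with thresholds $\Delta_T^\ast$ and $\Delta_T^\ast-1$ with probabilities $\gamma$ and $1-\gamma$ is a policy whose average transmission rate is $\gamma R(\Delta_T^\ast)+(1-\gamma)R(\Delta_T^\ast-1)$ and whose average VAoI is $\gamma\bar\Delta_{(\Delta_T^\ast)}+(1-\gamma)\bar\Delta_{(\Delta_T^\ast-1)}$, where $\bar\Delta_{(\Delta_T)}$ denotes the average VAoI of the threshold policy with threshold $\Delta_T$. *)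

theory Defs
  imports "HOL-Probability.Probability"
begin

definition vaoi_step :: "real \<Rightarrow> real \<Rightarrow> nat \<Rightarrow> nat \<Rightarrow> nat pmf" where
  "vaoi_step ps pg thr d =
     (if thr \<le> d then
        bind_pmf (bernoulli_pmf ps) (\<lambda>s. bind_pmf (bernoulli_pmf pg) (\<lambda>g.
          return_pmf (if s then of_bool g else d + of_bool g)))
      else map_pmf (\<lambda>g. d + of_bool g) (bernoulli_pmf pg))"

primrec vaoi_dist :: "real \<Rightarrow> real \<Rightarrow> nat \<Rightarrow> nat \<Rightarrow> nat \<Rightarrow> nat pmf" where
  "vaoi_dist ps pg thr d0 0 = return_pmf d0"
| "vaoi_dist ps pg thr d0 (Suc t) = bind_pmf (vaoi_dist ps pg thr d0 t) (vaoi_step ps pg thr)"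

text \<open>Finite-horizon averages (1/T) E[sum_{t<T} a(t)] and (1/T) E[sum_{t<T} \<Delta>(t)].\<close>
definition rate_avg :: "real \<Rightarrow> real \<Rightarrow> nat \<Rightarrow> nat \<Rightarrow> nat \<Rightarrow> real" where
  "rate_avg ps pg thr d0 T =
     (\<Sum>t<T. measure_pmf.prob (vaoi_dist ps pg thr d0 t) {d. thr \<le> d}) / real T"

definition vaoi_avg :: "real \<Rightarrow> real \<Rightarrow> nat \<Rightarrow> nat \<Rightarrow> nat \<Rightarrow> real" where
  "vaoi_avg ps pg thr d0 T =
     (\<Sum>t<T. measure_pmf.expectation (vaoi_dist ps pg thr d0 t) real) / real T"

definition thr_rate :: "real \<Rightarrow> real \<Rightarrow> nat \<Rightarrow> nat \<Rightarrow> real" where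
  "thr_rate ps pg thr d0 = lim (rate_avg ps pg thr d0)"

definition thr_vaoi :: "real \<Rightarrow> real \<Rightarrow> nat \<Rightarrow> nat \<Rightarrow> real" where
  "thr_vaoi ps pg thr d0 = lim (vaoi_avg ps pg thr d0)"

end

theory Submission
  imports Defs
begin


lemma finite_bool_pmf: "finite (set_pmf (p :: bool pmf))"
  by (rule finite_subset[of _ UNIV]) auto

lemma exp_bind_bern:
  fixes h :: "'a \<Rightarrow> real"
  assumes "0 \<le> p" "p \<le> 1" "\<And>b. finite (set_pmf (f b))"
  shows "measure_pmf.expectation (bernoulli_pmf p \<bind> f) h =
     p * measure_pmf.expectation (f True) h + (1-p) * measure_pmf.expectation (f False) h"
proof -
  have "measure_pmf.expectation (bernoulli_pmf p \<bind> f) h =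
     (\<Sum>a\<in>UNIV. pmf (bernoulli_pmf p) a *\<^sub>R measure_pmf.expectation (f a) h)"
    by (rule pmf_expectation_bind) (use assms in auto)
  also have "\<dots> = p * measure_pmf.expectation (f True) h + (1-p) * measure_pmf.expectation (f False) h"
    using assms by (simp add: UNIV_bool)
  finally show ?thesis .
qed

lemma step_finite: "finite (set_pmf (vaoi_step ps pg k d))"
  unfolding vaoi_step_def by (auto simp:  intro!: finite_UN_I finite_bool_pmf)

lemma step_exp:
  fixes f :: "nat \<Rightarrow> real"
  assumes "0 < ps" "ps < 1" "0 < pg" "pg < 1"
  shows "measure_pmf.expectation (vaoi_step ps pg k d) f =
    (if k \<le> d then ps*(pg*f 1 + (1-pg)*f 0) + (1-ps)*(pg*f(d+1) + (1-pg)*f d)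
     else pg*f(d+1) + (1-pg)*f d)"
proof (cases "k \<le> d")
  case True
  have fin: "\<And>s. finite (set_pmf (bernoulli_pmf pg \<bind> (\<lambda>g. return_pmf (if s then of_bool g else d + of_bool g))))"
    by (auto simp:  intro!: finite_UN_I finite_bool_pmf)
  show ?thesis using True assms
    by (simp add: vaoi_step_def exp_bind_bern fin)
next
  case False
  then show ?thesis using assms by (simp add: vaoi_step_def)
qed

lemma dist_finite: "finite (set_pmf (vaoi_dist ps pg k d0 t))"
  by (induction t) (auto simp:  step_finite intro!: finite_UN_I)

lemma dist_exp_Suc:
  fixes f :: "nat \<Rightarrow> real"
  shows "measure_pmf.expectation (vaoi_dist ps pg k d0 (Suc t)) f =
     measure_pmf.expectation (vaoi_dist ps pg k d0 t) (\<lambda>d. measure_pmf.expectation (vaoi_step ps pg k d) f)"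
proof -
  let ?A = "set_pmf (vaoi_dist ps pg k d0 t)"
  have "measure_pmf.expectation (vaoi_dist ps pg k d0 (Suc t)) f =
    (\<Sum>a\<in>?A. pmf (vaoi_dist ps pg k d0 t) a *\<^sub>R measure_pmf.expectation (vaoi_step ps pg k a) f)"
    unfolding vaoi_dist.simps by (rule pmf_expectation_bind) (auto simp: dist_finite step_finite)
  also have "\<dots> = measure_pmf.expectation (vaoi_dist ps pg k d0 t) (\<lambda>d. measure_pmf.expectation (vaoi_step ps pg k d) f)"
    by (rule integral_measure_pmf[symmetric]) (auto simp: dist_finite)
  finally show ?thesis .
qed


lemma exp_lin:
  fixes g a :: "nat \<Rightarrow> real"
  shows "measure_pmf.expectation (vaoi_dist ps pg k d0 t) (\<lambda>d. g d + c - a d) =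
    measure_pmf.expectation (vaoi_dist ps pg k d0 t) g + c - measure_pmf.expectation (vaoi_dist ps pg k d0 t) a"
  by (simp add: integrable_measure_pmf_finite dist_finite)

lemma telescope:
  fixes g a :: "nat \<Rightarrow> real"
  assumes "\<And>d. measure_pmf.expectation (vaoi_step ps pg k d) g = g d + c - a d"
  shows "(\<Sum>t<T. measure_pmf.expectation (vaoi_dist ps pg k d0 t) a) =
     real T * c + g d0 - measure_pmf.expectation (vaoi_dist ps pg k d0 T) g"
proof (induction T)
  case 0 then show ?case by simp
next
  case (Suc T)
  have "measure_pmf.expectation (vaoi_dist ps pg k d0 (Suc T)) g =
     measure_pmf.expectation (vaoi_dist ps pg k d0 T) g + c - measure_pmf.expectation (vaoi_dist ps pg k d0 T) a"
    by (simp only: dist_exp_Suc assms exp_lin)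
  then show ?case using Suc by (simp add: algebra_simps)
qed

lemma exp_bounds:
  fixes f :: "nat \<Rightarrow> real"
  assumes "\<And>d. lo \<le> f d" "\<And>d. f d \<le> hi"
  shows "lo \<le> measure_pmf.expectation M f \<and> measure_pmf.expectation M f \<le> hi"
proof -
  have int: "integrable (measure_pmf M) f"
  proof (rule measure_pmf.integrable_const_bound[where B="max \<bar>lo\<bar> \<bar>hi\<bar>"])
    show "AE x in measure_pmf M. norm (f x) \<le> max \<bar>lo\<bar> \<bar>hi\<bar>"
      proof (rule AE_I2)
      fix x show "norm (f x) \<le> max \<bar>lo\<bar> \<bar>hi\<bar>" using assms[of x] by auto
    qed
  qed simp
  have "lo \<le> measure_pmf.expectation M f"
    by (rule measure_pmf.integral_ge_const[OF int]) (use assms in auto)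
  moreover have "measure_pmf.expectation M f \<le> hi"
    by (rule measure_pmf.integral_le_const[OF int]) (use assms in auto)
  ultimately show ?thesis by simp
qed

lemma cesaro_aux:
  fixes x y :: "nat \<Rightarrow> real"
  assumes "\<And>T. T > 0 \<Longrightarrow> x T = L + y T / real T" "\<And>T. \<bar>y T\<bar> \<le> C"
  shows "x \<longlonglongrightarrow> L"
proof -
  have "(\<lambda>T. y T / real T) \<longlonglongrightarrow> 0"
  proof (rule Lim_null_comparison)
    show "\<forall>\<^sub>F T in sequentially. norm (y T / real T) \<le> C / real T"
      using assms(2) by (auto intro!: eventuallyI divide_right_mono simp: abs_divide)
    show "(\<lambda>T. C / real T) \<longlonglongrightarrow> 0" by (rule lim_const_over_n)
  qed
  then have "(\<lambda>T. L + y T / real T) \<longlonglongrightarrow> L" using tendsto_add[OF tendsto_const[of L]] by fastforce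
  moreover have "\<forall>\<^sub>F T in sequentially. L + y T / real T = x T"
    using assms(1) by (intro eventually_sequentiallyI[of 1]) auto
  ultimately show ?thesis by (rule Lim_transform_eventually)
qed


definition Rf :: "real \<Rightarrow> real \<Rightarrow> nat \<Rightarrow> real" where
  "Rf ps pg k = (if k = 0 then 1 else pg / (ps * real k + pg * (1 - ps)))"

definition Vf :: "real \<Rightarrow> real \<Rightarrow> nat \<Rightarrow> real" where
  "Vf ps pg k = pg / ps + ps * real k * (real k - 1) / (2 * (ps * real k + pg * (1 - ps)))"

lemma rate_lim:
  assumes "0 < ps" "ps < 1" "0 < pg" "pg < 1"
  shows "rate_avg ps pg k d0 \<longlonglongrightarrow> Rf ps pg k"
proof (cases "k = 0")
  case True
  show ?thesis
    by (rule cesaro_aux[where y="\<lambda>_. 0" and C=0]) (simp_all add: True rate_avg_def Rf_def)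
next
  case False
  define b where "b = ps * real k + pg * (1 - ps)"
  have b: "b > 0" using assms False unfolding b_def by (simp add: add_pos_nonneg)
  define g where "g = (\<lambda>d. real (min d k))"
  define a where "a = (\<lambda>d. b * indicator {d. k \<le> d} d)"
  let ?E = "\<lambda>t f. measure_pmf.expectation (vaoi_dist ps pg k d0 t) f"
  have step: "measure_pmf.expectation (vaoi_step ps pg k d) g = g d + pg - a d" for d
  proof (cases "k \<le> d")
    case True
    have "min 1 k = 1" using False by simp
    then show ?thesis using True assms by (simp add: step_exp g_def a_def b_def algebra_simps)
  next
    case F: False
    then have "min (d+1) k = d + 1" by simp
    then show ?thesis using F assms by (simp add: step_exp g_def a_def b_def algebra_simps)
  qed
  have Ea: "?E t a = b * measure_pmf.prob (vaoi_dist ps pg k d0 t) {d. k \<le> d}" for t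
    by (simp add: a_def)
  have gb: "0 \<le> ?E t g \<and> ?E t g \<le> real k" for t
    by (rule exp_bounds) (auto simp: g_def)
  show ?thesis
  proof (rule cesaro_aux[where y="\<lambda>T. (g d0 - ?E T g) / b" and C="real k / b"])
    fix T :: nat assume "T > 0"
    have "(\<Sum>t<T. ?E t a) = real T * pg + g d0 - ?E T g"
      by (rule telescope) (rule step)
    then have sp: "(\<Sum>t<T. measure_pmf.prob (vaoi_dist ps pg k d0 t) {d. k \<le> d}) = (real T * pg + g d0 - ?E T g) / b"
      using b by (simp add: Ea sum_distrib_left[symmetric] field_simps)
    show "rate_avg ps pg k d0 T = Rf ps pg k + (g d0 - ?E T g) / b / real T"
    proof -
      have "Rf ps pg k = pg / b" using False by (simp add: Rf_def b_def)
      then show ?thesis using \<open>T > 0\<close> b sp by (simp add: rate_avg_def field_simps)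
    qed
  next
    fix T
    have "0 \<le> g d0" "g d0 \<le> real k" by (auto simp: g_def)
    then show "\<bar>(g d0 - ?E T g) / b\<bar> \<le> real k / b"
      using gb[of T] b by (auto simp: abs_divide divide_right_mono abs_le_iff)
  qed
qed


lemma S_bound:
  assumes "0 < ps" "ps < 1" "0 < pg" "pg < 1"
  shows "measure_pmf.expectation (vaoi_dist ps pg k d0 t) real \<le> max (real d0) ((pg + ps * real k) / ps)"
proof (induction t)
  case 0 then show ?case by simp
next
  case (Suc t)
  let ?M = "max (real d0) ((pg + ps * real k) / ps)"
  let ?E = "\<lambda>f. measure_pmf.expectation (vaoi_dist ps pg k d0 t) f"
  have le: "measure_pmf.expectation (vaoi_step ps pg k d) real \<le> (1 - ps) * real d + (pg + ps * real k)" for d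
  proof (cases "k \<le> d")
    case True then show ?thesis using assms by (simp add: step_exp algebra_simps)
  next
    case False
    then have "ps * real d \<le> ps * real k" using assms by simp
    then show ?thesis using False assms by (simp add: step_exp algebra_simps)
  qed
  have "measure_pmf.expectation (vaoi_dist ps pg k d0 (Suc t)) real \<le> ?E (\<lambda>d. (1 - ps) * real d + (pg + ps * real k))"
    unfolding dist_exp_Suc
    by (rule integral_mono) (auto simp: integrable_measure_pmf_finite dist_finite le)
  also have "\<dots> = (1 - ps) * ?E real + (pg + ps * real k)"
    by (simp add: integrable_measure_pmf_finite dist_finite)
  also have "\<dots> \<le> (1 - ps) * ?M + (pg + ps * real k)"
    using Suc assms by (intro add_right_mono mult_left_mono) auto
  also have "\<dots> \<le> ?M"
  proof -
    have "pg + ps * real k \<le> ps * ?M"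
      using assms by (simp add: field_simps max_def)
    then show ?thesis by (simp add: algebra_simps)
  qed
  finally show ?case .
qed

lemma vaoi_lim:
  assumes "0 < ps" "ps < 1" "0 < pg" "pg < 1"
  shows "vaoi_avg ps pg k d0 \<longlonglongrightarrow> Vf ps pg k"
proof -
  define b where "b = ps * real k + pg * (1 - ps)"
  have b: "b > 0" using assms unfolding b_def by (simp add: add_nonneg_pos)
  define z where "z = ps * real k * (real k - 1) / (2 * b)"
  have zb: "z * b = ps * real k * (real k - 1) / 2" using b by (simp add: z_def)
  have V: "Vf ps pg k = pg / ps + z" by (simp add: Vf_def z_def b_def)
  define h where "h = (\<lambda>j::nat. (real j * z - real j * (real j - 1) / 2) / pg)"
  define \<psi> where "\<psi> = (\<lambda>d. real d / ps + h (min d k))"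
  let ?E = "\<lambda>t f. measure_pmf.expectation (vaoi_dist ps pg k d0 t) f"
  have step: "measure_pmf.expectation (vaoi_step ps pg k d) \<psi> = \<psi> d + Vf ps pg k - real d" for d
  proof (cases "k \<le> d")
    case True
    have e1: "h (min 1 k) = z / pg"
    proof (cases "k = 0")
      case True then show ?thesis by (simp add: h_def z_def)
    next
      case False then show ?thesis by (simp add: h_def)
    qed
    have hk: "ps * h k = ps * real k * z / pg - ps * real k * (real k - 1) / (2 * pg)"
      using assms by (simp add: h_def field_simps)
    have key: "ps * (z - h k) = z"
    proof -
      have "ps * (z - h k) * pg = ps * z * pg - ps * real k * z + ps * real k * (real k - 1) / 2"
        using hk assms by (simp add: field_simps)
      also have "\<dots> = z * pg - z * b + ps * real k * (real k - 1) / 2"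
        by (simp add: b_def algebra_simps)
      also have "\<dots> = z * pg" using zb by simp
      finally show ?thesis using assms by simp
    qed
    have "measure_pmf.expectation (vaoi_step ps pg k d) \<psi> =
       ps * (pg * (1 / ps + h (min 1 k)) + (1 - pg) * h 0) + (1 - ps) * (pg * ((real d + 1) / ps + h k) + (1 - pg) * (real d / ps + h k))"
      using True assms by (simp add: step_exp \<psi>_def)
    also have "\<dots> = real d / ps + h k + pg / ps + ps * (z - h k) - real d"
    proof -
      have h0: "h 0 = 0" by (simp add: h_def)
      show ?thesis unfolding e1 h0 using assms by (simp add: field_simps)
    qed
    also have "\<dots> = \<psi> d + Vf ps pg k - real d"
      using True by (simp add: key V \<psi>_def)
    finally show ?thesis .
  next
    case False
    have "measure_pmf.expectation (vaoi_step ps pg k d) \<psi> =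
       pg * ((real d + 1) / ps + h (d + 1)) + (1 - pg) * (real d / ps + h d)"
      using False assms by (simp add: step_exp \<psi>_def)
    also have "\<dots> = \<psi> d + Vf ps pg k - real d"
      using False assms by (simp add: V \<psi>_def h_def field_simps)
    finally show ?thesis .
  qed
  define H where "H = (\<Sum>j\<le>k. \<bar>h j\<bar>)"
  define M where "M = max (real d0) ((pg + ps * real k) / ps)"
  have hb: "\<bar>h (min d k)\<bar> \<le> H" for d
    unfolding H_def by (rule member_le_sum) auto
  have psib: "\<bar>?E T \<psi>\<bar> \<le> M / ps + H" for T
  proof -
    have "?E T \<psi> = ?E T real / ps + ?E T (\<lambda>d. h (min d k))"
      by (simp add: \<psi>_def integrable_measure_pmf_finite dist_finite)
    moreover have "0 \<le> ?E T real" by (rule integral_nonneg_AE) auto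
    moreover have "?E T real \<le> M"
      using S_bound[OF assms, of k d0 T] by (auto simp: M_def)
    moreover have "\<bar>?E T (\<lambda>d. h (min d k))\<bar> \<le> H"
    proof -
      have "\<And>d. -H \<le> h (min d k)" "\<And>d. h (min d k) \<le> H" using hb abs_le_iff by (metis minus_le_iff)+
      from exp_bounds[of "-H" "\<lambda>d. h (min d k)" H, OF this, of "vaoi_dist ps pg k d0 T"]
      show ?thesis by (auto simp: abs_le_iff)
    qed
    moreover have "?E T real / ps \<le> M / ps" using \<open>?E T real \<le> M\<close> assms by (simp add: divide_right_mono)
    moreover have "0 \<le> ?E T real / ps" using \<open>0 \<le> ?E T real\<close> assms by simp
    ultimately show ?thesis by (auto simp: abs_le_iff)
  qed
  show ?thesis
  proof (rule cesaro_aux[where y="\<lambda>T. \<psi> d0 - ?E T \<psi>" and C="\<bar>\<psi> d0\<bar> + M / ps + H"])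
    fix T :: nat assume "T > 0"
    have "(\<Sum>t<T. ?E t real) = real T * Vf ps pg k + \<psi> d0 - ?E T \<psi>"
      by (rule telescope) (rule step)
    then show "vaoi_avg ps pg k d0 T = Vf ps pg k + (\<psi> d0 - ?E T \<psi>) / real T"
      using \<open>T > 0\<close> by (simp add: vaoi_avg_def field_simps)
  next
    fix T show "\<bar>\<psi> d0 - ?E T \<psi>\<bar> \<le> \<bar>\<psi> d0\<bar> + M / ps + H" using psib[of T] by linarith
  qed
qed


lemma chord:
  fixes A B C x x1 x2 :: real
  assumes "0 \<le> A" "0 < x1" "x1 < x2" "0 < x" "x \<le> x1 \<or> x2 \<le> x"
  shows "A / x1 + B + C * x1 + ((A / x2 + B + C * x2) - (A / x1 + B + C * x1)) / (x2 - x1) * (x - x1)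
         \<le> A / x + B + C * x"
proof -
  have eq: "(A / x + B + C * x) - (A / x1 + B + C * x1 + ((A / x2 + B + C * x2) - (A / x1 + B + C * x1)) / (x2 - x1) * (x - x1))
      = A * ((x - x1) * (x - x2)) / (x * x1 * x2)"
    using assms by (simp add: field_simps)
  have "0 \<le> (x - x1) * (x - x2)" using assms by (auto intro: mult_nonpos_nonpos)
  then have "0 \<le> A * ((x - x1) * (x - x2)) / (x * x1 * x2)" using assms by simp
  then show ?thesis using eq by linarith
qed

lemma Rf_pos: "0 < ps \<Longrightarrow> ps < 1 \<Longrightarrow> 0 < pg \<Longrightarrow> 0 < Rf ps pg k"
  by (simp add: Rf_def add_pos_nonneg)

lemma Rf_Suc_less:
  assumes "0 < ps" "ps < 1" "0 < pg" "pg < 1"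
  shows "Rf ps pg (Suc k) < Rf ps pg k"
proof (cases "k = 0")
  case True
  have "pg < ps * 1 + pg * (1 - ps)" using assms by (simp add: algebra_simps)
  then show ?thesis using True assms by (simp add: Rf_def add_pos_nonneg)
next
  case False
  have p: "0 < ps * real k + pg * (1 - ps)" using assms False by (simp add: add_pos_nonneg)
  have "ps * real k + pg * (1 - ps) < ps * real (Suc k) + pg * (1 - ps)" using assms by simp
  then have "pg / (ps * real (Suc k) + pg * (1 - ps)) < pg / (ps * real k + pg * (1 - ps))"
    using p assms by (intro divide_strict_left_mono) (auto intro!: mult_pos_pos add_pos_nonneg)
  then show ?thesis using False by (simp add: Rf_def)
qed

lemma Rf_antimono:
  assumes "0 < ps" "ps < 1" "0 < pg" "pg < 1" "k \<le> m"
  shows "Rf ps pg m \<le> Rf ps pg k"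
  using assms(5)
proof (induction m)
  case 0 then show ?case by simp
next
  case (Suc m)
  then show ?case using Rf_Suc_less[OF assms(1-4), of m]
    by (cases "k = Suc m") auto
qed

lemma Vf_Suc_mono:
  assumes "0 < ps" "ps < 1" "0 < pg" "pg < 1"
  shows "Vf ps pg k \<le> Vf ps pg (Suc k)"
proof -
  define e where "e = pg * (1 - ps)"
  have e: "0 < e" using assms by (simp add: e_def)
  have b1: "0 < ps * real k + e" using e assms by (simp add: add_nonneg_pos)
  have b2: "0 < ps * (real k + 1) + e" using e assms by (simp add: add_nonneg_pos)
  have "real k * (real k - 1) * (ps * (real k + 1) + e) \<le> (real k + 1) * real k * (ps * real k + e)"
  proof -
    have "(real k + 1) * real k * (ps * real k + e) - real k * (real k - 1) * (ps * (real k + 1) + e)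
       = real k * (ps * real k + ps + 2 * e)" by (simp add: algebra_simps)
    moreover have "0 \<le> real k * (ps * real k + ps + 2 * e)" using assms e by simp
    ultimately show ?thesis by linarith
  qed
  then have "real k * (real k - 1) / (ps * real k + e) \<le> (real k + 1) * real k / (ps * (real k + 1) + e)"
    using b1 b2 by (simp add: divide_simps)
  then have "ps * (real k * (real k - 1) / (ps * real k + e)) / 2 \<le> ps * ((real k + 1) * real k / (ps * (real k + 1) + e)) / 2"
    using assms by (intro divide_right_mono mult_left_mono) auto
  then show ?thesis unfolding Vf_def e_def[symmetric] by (simp add: field_simps)
qed

lemma Vf_mono:
  assumes "0 < ps" "ps < 1" "0 < pg" "pg < 1" "k \<le> m"
  shows "Vf ps pg k \<le> Vf ps pg m"
  using assms(5)
proof (induction m)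
  case 0 then show ?case by simp
next
  case (Suc m)
  then show ?case using Vf_Suc_mono[OF assms(1-4), of m]
    by (cases "k = Suc m") auto
qed

lemma Vf_ge: "0 < ps \<Longrightarrow> ps < 1 \<Longrightarrow> 0 < pg \<Longrightarrow> pg / ps \<le> Vf ps pg k"
  unfolding Vf_def
  by (cases k) (auto intro!: divide_nonneg_pos add_pos_nonneg)

lemma Vf_curve:
  assumes "0 < ps" "ps < 1" "0 < pg" "pg < 1" "k \<ge> 1"
  shows "Vf ps pg k = (pg / (2 * ps)) / Rf ps pg k + (pg / ps - (2 * (pg * (1 - ps)) + ps) / (2 * ps))
     + ((pg * (1 - ps)) * (pg * (1 - ps) + ps) / (2 * pg * ps)) * Rf ps pg k"
proof -
  define e where "e = pg * (1 - ps)"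
  define b where "b = ps * real k + e"
  have b: "0 < b" using assms by (simp add: b_def e_def add_pos_nonneg)
  have R: "Rf ps pg k = pg / b" using assms by (simp add: Rf_def b_def e_def)
  have V: "Vf ps pg k = pg / ps + ps * real k * (real k - 1) / (2 * b)" by (simp add: Vf_def b_def e_def)
  have k: "real k = (b - e) / ps" using assms by (simp add: b_def)
  have "pg / ps + ps * real k * (real k - 1) / (2 * b) = (pg / (2 * ps)) / (pg / b) + (pg / ps - (2 * e + ps) / (2 * ps))
     + (e * (e + ps) / (2 * pg * ps)) * (pg / b)"
    unfolding k using assms b by (simp add: field_simps)
  then show ?thesis unfolding R V e_def .
qed


theorem theorem1:
  fixes ps pg \<alpha> :: real and d0 :: nat
  assumes "0 < ps" "ps < 1" "0 < pg" "pg < 1" "0 < \<alpha>" "\<alpha> \<le> 1"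
  defines "\<beta> \<equiv> 1 - (1 - ps) * (1 - pg)"
  defines "R \<equiv> (\<lambda>k::nat. if k = 0 then 1 else pg / ((real k - 1) * ps + \<beta>))"
  defines "Dstar \<equiv> nat \<lceil>pg / ps * (1 / \<alpha> - 1 + ps)\<rceil>"
  defines "\<gamma> \<equiv> (R (Dstar - 1) - \<alpha>) / (R (Dstar - 1) - R Dstar)"
  shows
    "(\<forall>k. rate_avg ps pg k d0 \<longlonglongrightarrow> R k) \<and>
     (\<forall>k. convergent (vaoi_avg ps pg k d0)) \<and>
     1 \<le> Dstar \<and> 0 \<le> \<gamma> \<and> \<gamma> \<le> 1 \<and>
     \<gamma> * thr_rate ps pg Dstar d0 + (1 - \<gamma>) * thr_rate ps pg (Dstar - 1) d0 \<le> \<alpha> \<and>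
     (\<forall>(S::nat set) (w::nat \<Rightarrow> real).
        finite S \<and> (\<forall>k\<in>S. 0 \<le> w k) \<and> sum w S = 1 \<and>
        (\<Sum>k\<in>S. w k * thr_rate ps pg k d0) \<le> \<alpha> \<longrightarrow>
        \<gamma> * thr_vaoi ps pg Dstar d0 + (1 - \<gamma>) * thr_vaoi ps pg (Dstar - 1) d0
          \<le> (\<Sum>k\<in>S. w k * thr_vaoi ps pg k d0))"
proof -
  note ps = assms(1,2,3,4)
  have Req: "R = Rf ps pg"
  proof
    fix k :: nat
    have "(real k - 1) * ps + \<beta> = ps * real k + pg * (1 - ps)" by (simp add: \<beta>_def algebra_simps)
    then show "R k = Rf ps pg k" by (simp add: R_def Rf_def)
  qed
  have rate: "thr_rate ps pg k d0 = Rf ps pg k" for k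
    unfolding thr_rate_def using rate_lim[OF ps] by (rule limI)
  have vaoi: "thr_vaoi ps pg k d0 = Vf ps pg k" for k
    unfolding thr_vaoi_def using vaoi_lim[OF ps] by (rule limI)
  define X where "X = pg / ps * (1 / \<alpha> - 1 + ps)"
  define e where "e = pg * (1 - ps)"
  have e: "0 < e" using ps by (simp add: e_def)
  have ia: "1 \<le> 1 / \<alpha>" using assms(5,6) by simp
  have X0: "0 < X" unfolding X_def using ps ia by (intro mult_pos_pos divide_pos_pos) auto
  have psX: "ps * X + e = pg / \<alpha>" using ps by (simp add: X_def e_def field_simps)
  have D: "Dstar = nat \<lceil>X\<rceil>" by (simp add: Dstar_def X_def)
  have D1: "1 \<le> Dstar" using X0 unfolding D by linarith
  have DX: "X \<le> real Dstar" unfolding D using X0 by linarith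
  have D1X: "real (Dstar - 1) < X" if "2 \<le> Dstar"
  proof -
    have "real (Dstar - 1) = real Dstar - 1" using that by simp
    also have "\<dots> < X" unfolding D using X0 by linarith
    finally show ?thesis .
  qed
  define x1 where "x1 = Rf ps pg Dstar"
  define x2 where "x2 = Rf ps pg (Dstar - 1)"
  define v1 where "v1 = Vf ps pg Dstar"
  define v2 where "v2 = Vf ps pg (Dstar - 1)"
  have x1a: "x1 \<le> \<alpha>"
  proof -
    have "pg / \<alpha> \<le> ps * real Dstar + e" using psX DX ps by (smt (verit) mult_left_mono)
    moreover have "0 < pg / \<alpha>" using ps assms(5) by simp
    moreover have "0 < ps * real Dstar + e" using ps e by (simp add: add_nonneg_pos)
    ultimately have "pg / (ps * real Dstar + e) \<le> pg / (pg / \<alpha>)"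
      using ps by (intro divide_left_mono) (simp_all only: mult_pos_pos less_imp_le)
    also have "\<dots> = \<alpha>" using ps assms(5) by simp
    finally show ?thesis using D1 by (simp add: x1_def Rf_def e_def)
  qed
  have x2a: "\<alpha> \<le> x2"
  proof (cases "Dstar = 1")
    case True then show ?thesis using assms(6) by (simp add: x2_def Rf_def)
  next
    case False
    then have "2 \<le> Dstar" using D1 by simp
    then have "ps * real (Dstar - 1) + e < pg / \<alpha>" using psX D1X ps by (smt (verit) mult_strict_left_mono)
    moreover have "0 < ps * real (Dstar - 1) + e" using ps e by (simp add: add_nonneg_pos)
    ultimately have "pg / (pg / \<alpha>) \<le> pg / (ps * real (Dstar - 1) + e)"
      using ps assms(5) by (intro divide_left_mono) (auto intro!: divide_pos_pos mult_pos_pos)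
    moreover have "pg / (pg / \<alpha>) = \<alpha>" using ps assms(5) by simp
    ultimately show ?thesis using False D1 by (simp add: x2_def Rf_def e_def)
  qed
  have x12: "x1 < x2"
    using Rf_Suc_less[OF ps, of "Dstar - 1"] D1 by (simp add: x1_def x2_def)
  have x10: "0 < x1" using Rf_pos ps by (simp add: x1_def)
  have g: "\<gamma> = (x2 - \<alpha>) / (x2 - x1)" by (simp add: \<gamma>_def Req x1_def x2_def)
  have g0: "0 \<le> \<gamma>" using g x12 x2a by simp
  have g1: "\<gamma> \<le> 1" using g x12 x1a by simp
  have mixrate: "\<gamma> * x1 + (1 - \<gamma>) * x2 = \<alpha>" using g x12 by (simp add: field_simps)
  define s where "s = (v2 - v1) / (x2 - x1)"
  have v12: "v2 \<le> v1" using Vf_mono[OF ps, of "Dstar - 1" Dstar] by (simp add: v1_def v2_def)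
  have s0: "s \<le> 0" using v12 x12 by (simp add: s_def divide_nonpos_pos)
  have mixv: "\<gamma> * v1 + (1 - \<gamma>) * v2 = v1 + s * (\<alpha> - x1)"
  proof -
    have "1 - \<gamma> = (\<alpha> - x1) / (x2 - x1)" unfolding g using x12 by (simp add: field_simps)
    then have "(1 - \<gamma>) * (v2 - v1) = s * (\<alpha> - x1)" by (simp add: s_def)
    then show ?thesis by (simp add: algebra_simps)
  qed
  have supp: "v1 + s * (Rf ps pg k - x1) \<le> Vf ps pg k" for k
  proof (cases "Dstar = 1")
    case True
    have "v2 = v1" using True by (simp add: v1_def v2_def Vf_def)
    then have "s = 0" by (simp add: s_def)
    moreover have "v1 = pg / ps" using True by (simp add: v1_def Vf_def)
    ultimately show ?thesis using Vf_ge[of ps pg k] ps by simp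
  next
    case False
    then have D2: "2 \<le> Dstar" using D1 by simp
    define A where "A = pg / (2 * ps)"
    define B where "B = pg / ps - (2 * (pg * (1 - ps)) + ps) / (2 * ps)"
    define C where "C = (pg * (1 - ps)) * (pg * (1 - ps) + ps) / (2 * pg * ps)"
    have curve: "Vf ps pg j = A / Rf ps pg j + B + C * Rf ps pg j" if "j \<ge> 1" for j
      using Vf_curve[OF ps that] by (simp add: A_def B_def C_def)
    have A0: "0 \<le> A" using ps by (simp add: A_def)
    have v1c: "v1 = A / x1 + B + C * x1" using curve[of Dstar] D1 by (simp add: v1_def x1_def)
    have v2c: "v2 = A / x2 + B + C * x2" using curve[of "Dstar - 1"] D2 by (simp add: v2_def x2_def)
    have main: "v1 + s * (Rf ps pg j - x1) \<le> Vf ps pg j" if "j \<ge> 1" for j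
    proof -
      have "Rf ps pg j \<le> x1 \<or> x2 \<le> Rf ps pg j"
      proof (cases "Dstar \<le> j")
        case True then show ?thesis using Rf_antimono[OF ps True] by (simp add: x1_def)
      next
        case False then have "j \<le> Dstar - 1" by simp
        then show ?thesis using Rf_antimono[OF ps] by (simp add: x2_def)
      qed
      from chord[OF A0 x10 x12 Rf_pos[OF ps(1,2,3)] this, of B C]
      show ?thesis unfolding s_def v1c v2c curve[OF that] .
    qed
    show ?thesis
    proof (cases "k = 0")
      case False then show ?thesis using main by simp
    next
      case True
      have "Vf ps pg 0 = Vf ps pg 1" by (simp add: Vf_def)
      moreover have "Rf ps pg 1 \<le> Rf ps pg 0" using Rf_antimono[OF ps] by simp
      then have "s * (Rf ps pg 0 - x1) \<le> s * (Rf ps pg 1 - x1)" using s0 by (simp add: mult_left_mono_neg)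
      ultimately show ?thesis using main[of 1] True by simp
    qed
  qed
  have opt: "\<gamma> * thr_vaoi ps pg Dstar d0 + (1 - \<gamma>) * thr_vaoi ps pg (Dstar - 1) d0
          \<le> (\<Sum>k\<in>S. w k * thr_vaoi ps pg k d0)"
    if S: "finite S" "\<forall>k\<in>S. 0 \<le> w k" "sum w S = 1" "(\<Sum>k\<in>S. w k * thr_rate ps pg k d0) \<le> \<alpha>"
    for S :: "nat set" and w :: "nat \<Rightarrow> real"
  proof -
    have "\<gamma> * thr_vaoi ps pg Dstar d0 + (1 - \<gamma>) * thr_vaoi ps pg (Dstar - 1) d0 = v1 + s * (\<alpha> - x1)"
      using mixv by (simp add: vaoi v1_def v2_def)
    also have "\<dots> \<le> v1 + s * ((\<Sum>k\<in>S. w k * Rf ps pg k) - x1)"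
      using S(4) s0 by (simp add: rate mult_left_mono_neg)
    also have "\<dots> = (\<Sum>k\<in>S. w k * (v1 + s * (Rf ps pg k - x1)))"
    proof -
      have "(\<Sum>k\<in>S. w k * (v1 + s * (Rf ps pg k - x1))) =
          (\<Sum>k\<in>S. (v1 - s * x1) * w k + s * (w k * Rf ps pg k))"
        by (intro sum.cong) (auto simp: algebra_simps)
      also have "\<dots> = (v1 - s * x1) * sum w S + s * (\<Sum>k\<in>S. w k * Rf ps pg k)"
        by (simp add: sum.distrib sum_distrib_left)
      finally show ?thesis using S(3) by (simp add: algebra_simps)
    qed
    also have "\<dots> \<le> (\<Sum>k\<in>S. w k * Vf ps pg k)"
      using S(2) supp by (intro sum_mono mult_left_mono) auto
    finally show ?thesis by (simp add: vaoi)
  qed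
  have r1: "\<forall>k. rate_avg ps pg k d0 \<longlonglongrightarrow> R k" using rate_lim[OF ps] by (simp add: Req)
  have r2: "\<forall>k. convergent (vaoi_avg ps pg k d0)" using vaoi_lim[OF ps] by (auto simp: convergent_def)
  have r3: "\<gamma> * thr_rate ps pg Dstar d0 + (1 - \<gamma>) * thr_rate ps pg (Dstar - 1) d0 \<le> \<alpha>"
    using mixrate by (simp add: rate x1_def x2_def)
  show ?thesis using r1 r2 D1 g0 g1 r3 opt by blast
qed

end
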